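(* Let $\{\alpha_k\}$ be the stepsize sequence generated by Algorithm 1 or Algorithm 2 (described in the context) under the Standing Assumption and Matrix Assumption of the context, and suppose the algorithm does not terminate finitely. Then there exists $\alpha_{\min}>0$ such that $\alpha_k\ge\alpha_{\min}$ for all $k\in\mathbb{N}$.
   Context: Notation: $g_k=\nabla f(x_k)$, $c_k=c(x_k)$, $J_k=\nabla c(x_k)^T$; $\phi(x,\tau)=\tau f(x)+\|c(x)\|_1$; $\Delta q(x,\tau,g,H,d)=-\tau(g^Td+\frac12\max\{d^THd,0\})+\|c(x)\|_1$. Matrix Assumption: symmetric $H_k$ with $\|H_k\|_2\le\kappa_H$ and $u^TH_ku\ge\zeta\|u\|_2^2$ whenever $J_ku=0$. Common iteration: $(d_k,y_k)$ solves $H_kd_k+J_k^Ty_k=-g_k$, $J_kd_k=-c_k$; stop if $g_k+J_k^Ty_k=0$ and $c_k=0$. $\tau_k^{trial}=\infty$ if $g_k^Td_k+\max\{d_k^TH_kd_k,0\}\le0$, else $\frac{(1-\sigma)\|c_k\|_1}{g_k^Td_k+\max\{d_k^TH_kd_k,0\}}$; $\tau_k=\tau_{k-1}$ if $\tau_{k-1}\le\tau_k^{trial}$, else $(1-\epsilon)\tau_k^{trial}$ (with $\tau_{-1}>0$, $\epsilon,\sigma\in(0,1)$); $x_{k+1}=x_k+\alpha_kd_k$. (SD) for trial $\alpha$: $\phi(x_k+\alpha d_k,\tau_k)\le\phi(x_k,\tau_k)-\eta\alpha\Delta q(x_k,\tau_k,g_k,H_k,d_k)$, $\eta\in(0,1)$.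 Algorithm 1 (inputs also $\rho>1$, $L_{-1}>0$, $\gamma_{-1,i}>0$): choose $L_{k,0}\in(0,L_{k-1}]$, $\gamma_{k,i,0}\in(0,\gamma_{k-1,i}]$; for $j=0,1,\dots$ with $\Lambda_{k,j}=\tau_kL_{k,j}+\sum_i\gamma_{k,i,j}$: $\widehat\alpha_{k,j}=\frac{2(1-\eta)\Delta q(x_k,\tau_k,g_k,H_k,d_k)}{\Lambda_{k,j}\|d_k\|_2^2}$, $\widetilde\alpha_{k,j}=\widehat\alpha_{k,j}-\frac{4\|c_k\|_1}{\Lambda_{k,j}\|d_k\|_2^2}$; $\alpha_{k,j}=\widehat\alpha_{k,j}$ if $\widehat\alpha_{k,j}<1$, $1$ if $\widetilde\alpha_{k,j}\le1\le\widehat\alpha_{k,j}$, $\widetilde\alpha_{k,j}$ if $\widetilde\alpha_{k,j}>1$; accept ($\alpha_k=\alpha_{k,j}$, $L_k=L_{k,j}$, $\gamma_{k,i}=\gamma_{k,i,j}$) if (SD) holds or if both $f(x_k+\alpha_{k,j}d_k)\le f(x_k)+\alpha_{k,j}g_k^Td_k+\frac12L_{k,j}\alpha_{k,j}^2\|d_k\|_2^2$ (LF) and $|c_i(x_k+\alpha_{k,j}d_k)|\le|c_i(x_k)+\alpha_{k,j}\nabla c_i(x_k)^Td_k|+\frac12\gamma_{k,i,j}\alpha_{k,j}^2\|d_k\|_2^2$ (LC$_i$) for all $i$; otherwise multiply $L_{k,j}$ by $\rho$ if (LF) fails and $\gamma_{k,i,j}$ by $\rho$ if (LC$_i$) fails.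 Algorithm 2 (inputs also $\nu\in(0,1)$, $\alpha>0$): $\alpha_k=\nu^j\alpha$ for the smallest $j\ge0$ such that (SD) holds. Standing Assumption: an open convex set $\mathcal X$ contains all iterates and trial points $x_k+\alpha_{k,j}d_k$; $f$ is $C^1$, bounded below on $\mathcal X$, $\nabla f$ bounded and $L$-Lipschitz on $\mathcal X$; $c$, $\nabla c^T$ bounded on $\mathcal X$; $\nabla c_i$ is $\gamma_i$-Lipschitz on $\mathcal X$; singular values of $\nabla c(x)^T$ bounded away from zero uniformly over $\mathcal X$. *)

theory Defs
  imports "HOL-Analysis.Analysis"
begin

text \<open>The Jacobian J(x) = nabla c(x)^T is a real^'n^'m matrix whose i-th row is nabla c_i(x).\<close>

definition l1norm :: "real^'m \<Rightarrow> real" where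
  "l1norm v = (\<Sum>i\<in>UNIV. \<bar>v $ i\<bar>)"

definition merit :: "(real^'n \<Rightarrow> real) \<Rightarrow> (real^'n \<Rightarrow> real^'m) \<Rightarrow> real^'n \<Rightarrow> real \<Rightarrow> real" where
  "merit f c x tau = tau * f x + l1norm (c x)"

definition Delta_q :: "real^'m \<Rightarrow> real \<Rightarrow> real^'n \<Rightarrow> real^'n^'n \<Rightarrow> real^'n \<Rightarrow> real" where
  "Delta_q cx tau g H d = - tau * (g \<bullet> d + (1/2) * max (d \<bullet> (H *v d)) 0) + l1norm cx"

text \<open>Merit parameter update: tau_k from tau_{k-1}; trial value is infinite when
  g^T d + max(d^T H d,0) <= 0.\<close>
definition tau_update :: "real \<Rightarrow> real \<Rightarrow> real \<Rightarrow> real^'m \<Rightarrow> real^'n \<Rightarrow> real^'n^'n \<Rightarrow> real^'n \<Rightarrow> real" where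
  "tau_update sgm eps tau_prev cx g H d =
     (let s = g \<bullet> d + max (d \<bullet> (H *v d)) 0 in
      if s \<le> 0 then tau_prev
      else (let tr = (1 - sgm) * l1norm cx / s in
            if tau_prev \<le> tr then tau_prev else (1 - eps) * tr))"

definition SD_cond :: "(real^'n \<Rightarrow> real) \<Rightarrow> (real^'n \<Rightarrow> real^'n) \<Rightarrow> (real^'n \<Rightarrow> real^'m)
   \<Rightarrow> real \<Rightarrow> real^'n \<Rightarrow> real^'n \<Rightarrow> real^'n^'n \<Rightarrow> real \<Rightarrow> real \<Rightarrow> bool" where
  "SD_cond f gf c eta xk dk Hk tauk a \<longleftrightarrow>
     merit f c (xk + a *\<^sub>R dk) tauk
       \<le> merit f c xk tauk - eta * a * Delta_q (c xk) tauk (gf xk) Hk dk"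

text \<open>Common iteration (the part shared by both algorithms), given the stepsizes alpha.\<close>
definition common_iteration ::
  "(real^'n \<Rightarrow> real) \<Rightarrow> (real^'n \<Rightarrow> real^'n) \<Rightarrow> (real^'n \<Rightarrow> real^'m) \<Rightarrow> (real^'n \<Rightarrow> real^'n^'m)
   \<Rightarrow> real \<Rightarrow> real \<Rightarrow> real
   \<Rightarrow> (nat \<Rightarrow> real^'n) \<Rightarrow> (nat \<Rightarrow> real^'n^'n) \<Rightarrow> (nat \<Rightarrow> real^'n) \<Rightarrow> (nat \<Rightarrow> real^'m)
   \<Rightarrow> (nat \<Rightarrow> real) \<Rightarrow> (nat \<Rightarrow> real) \<Rightarrow> bool" where
  "common_iteration f gf c Jc tau_m1 sgm eps x H d y tau alpha \<longleftrightarrow>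
     (\<forall>k. H k *v d k + transpose (Jc (x k)) *v y k = - gf (x k)
          \<and> Jc (x k) *v d k = - c (x k)
          \<and> tau k = tau_update sgm eps (if k = 0 then tau_m1 else tau (k - 1))
                       (c (x k)) (gf (x k)) (H k) (d k)
          \<and> x (Suc k) = x k + alpha k *\<^sub>R d k)"

definition alg1_step :: "real \<Rightarrow> real \<Rightarrow> real \<Rightarrow> real \<Rightarrow> real \<Rightarrow> real" where
  "alg1_step eta dq c1 Lam nd2 =
     (let ah = 2 * (1 - eta) * dq / (Lam * nd2);
          atl = ah - 4 * c1 / (Lam * nd2)
      in if ah < 1 then ah else if atl \<le> 1 \<and> 1 \<le> ah then 1 else atl)"

definition LF_cond :: "(real^'n \<Rightarrow> real) \<Rightarrow> (real^'n \<Rightarrow> real^'n) \<Rightarrow> real^'n \<Rightarrow> real^'n \<Rightarrow> real \<Rightarrow> real \<Rightarrow> bool" where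
  "LF_cond f gf xk dk L a \<longleftrightarrow>
     f (xk + a *\<^sub>R dk) \<le> f xk + a * (gf xk \<bullet> dk) + (1/2) * L * a\<^sup>2 * (norm dk)\<^sup>2"

definition LC_cond :: "(real^'n \<Rightarrow> real^'m) \<Rightarrow> (real^'n \<Rightarrow> real^'n^'m) \<Rightarrow> real^'n \<Rightarrow> real^'n \<Rightarrow> 'm \<Rightarrow> real \<Rightarrow> real \<Rightarrow> bool" where
  "LC_cond c Jc xk dk i gam a \<longleftrightarrow>
     \<bar>c (xk + a *\<^sub>R dk) $ i\<bar> \<le> \<bar>c xk $ i + a * ((Jc xk $ i) \<bullet> dk)\<bar> + (1/2) * gam * a\<^sup>2 * (norm dk)\<^sup>2"

text \<open>Algorithm 1: Lk k j = L_{k,j}, Gk k j $ i = gamma_{k,i,j}, jacc k = the index j at which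
  the inner loop of iteration k accepts. All trial points lie in X.\<close>
definition alg1_run ::
  "(real^'n \<Rightarrow> real) \<Rightarrow> (real^'n \<Rightarrow> real^'n) \<Rightarrow> (real^'n \<Rightarrow> real^'m) \<Rightarrow> (real^'n \<Rightarrow> real^'n^'m)
   \<Rightarrow> (real^'n) set \<Rightarrow> real
   \<Rightarrow> (nat \<Rightarrow> real^'n) \<Rightarrow> (nat \<Rightarrow> real^'n^'n) \<Rightarrow> (nat \<Rightarrow> real^'n)
   \<Rightarrow> (nat \<Rightarrow> real) \<Rightarrow> (nat \<Rightarrow> real) \<Rightarrow> bool" where
  "alg1_run f gf c Jc X eta x H d tau alpha \<longleftrightarrow>
   (\<exists>(rho::real) (L_m1::real) (gam_m1::real^'m)
      (Lk::nat \<Rightarrow> nat \<Rightarrow> real) (Gk::nat \<Rightarrow> nat \<Rightarrow> real^'m) (jacc::nat \<Rightarrow> nat).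
     1 < rho \<and> 0 < L_m1 \<and> (\<forall>i. 0 < gam_m1 $ i) \<and>
     (let Lam = (\<lambda>k j. tau k * Lk k j + (\<Sum>i\<in>UNIV. Gk k j $ i));
          akj = (\<lambda>k j. alg1_step eta (Delta_q (c (x k)) (tau k) (gf (x k)) (H k) (d k))
                          (l1norm (c (x k))) (Lam k j) ((norm (d k))\<^sup>2));
          LF = (\<lambda>k j. LF_cond f gf (x k) (d k) (Lk k j) (akj k j));
          LC = (\<lambda>k j i. LC_cond c Jc (x k) (d k) i (Gk k j $ i) (akj k j));
          acc = (\<lambda>k j. SD_cond f gf c eta (x k) (d k) (H k) (tau k) (akj k j)
                        \<or> (LF k j \<and> (\<forall>i. LC k j i)))
      in
       (0 < Lk 0 0 \<and> Lk 0 0 \<le> L_m1) \<and>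
       (\<forall>i. 0 < Gk 0 0 $ i \<and> Gk 0 0 $ i \<le> gam_m1 $ i) \<and>
       (\<forall>k. 0 < Lk (Suc k) 0 \<and> Lk (Suc k) 0 \<le> Lk k (jacc k)) \<and>
       (\<forall>k i. 0 < Gk (Suc k) 0 $ i \<and> Gk (Suc k) 0 $ i \<le> Gk k (jacc k) $ i) \<and>
       (\<forall>k j. j < jacc k \<longrightarrow>
           \<not> acc k j
           \<and> Lk k (Suc j) = (if LF k j then Lk k j else rho * Lk k j)
           \<and> (\<forall>i. Gk k (Suc j) $ i = (if LC k j i then Gk k j $ i else rho * Gk k j $ i))) \<and>
       (\<forall>k. acc k (jacc k) \<and> alpha k = akj k (jacc k)) \<and>
       (\<forall>k j. j \<le> jacc k \<longrightarrow> x k + akj k j *\<^sub>R d k \<in> X)))"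

definition alg2_run ::
  "(real^'n \<Rightarrow> real) \<Rightarrow> (real^'n \<Rightarrow> real^'n) \<Rightarrow> (real^'n \<Rightarrow> real^'m)
   \<Rightarrow> (real^'n) set \<Rightarrow> real
   \<Rightarrow> (nat \<Rightarrow> real^'n) \<Rightarrow> (nat \<Rightarrow> real^'n^'n) \<Rightarrow> (nat \<Rightarrow> real^'n)
   \<Rightarrow> (nat \<Rightarrow> real) \<Rightarrow> (nat \<Rightarrow> real) \<Rightarrow> bool" where
  "alg2_run f gf c X eta x H d tau alpha \<longleftrightarrow>
   (\<exists>(nu::real) (abar::real) (jacc::nat \<Rightarrow> nat).
      0 < nu \<and> nu < 1 \<and> 0 < abar \<and>
      (\<forall>k. alpha k = nu ^ jacc k * abar
           \<and> SD_cond f gf c eta (x k) (d k) (H k) (tau k) (nu ^ jacc k * abar)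
           \<and> (\<forall>j < jacc k. \<not> SD_cond f gf c eta (x k) (d k) (H k) (tau k) (nu ^ j * abar))
           \<and> (\<forall>j \<le> jacc k. x k + (nu ^ j * abar) *\<^sub>R d k \<in> X)))"

end

theory Submission
  imports Defs
begin


lemma taylor_bound:
  fixes F :: "real^'n \<Rightarrow> real" and DF :: "real^'n \<Rightarrow> real^'n"
  assumes X: "convex X" "open X"
    and der: "\<forall>z\<in>X. (F has_derivative (\<lambda>h. DF z \<bullet> h)) (at z)"
    and lip: "L-lipschitz_on X DF"
    and x: "x \<in> X" and xe: "x + e \<in> X"
  shows "\<bar>F (x + e) - F x - DF x \<bullet> e\<bar> \<le> L / 2 * (norm e)\<^sup>2"
proof -
  have L0: "0 \<le> L" using lip by (simp add: lipschitz_on_def)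
  have inX: "x + t *\<^sub>R e \<in> X" if "0 \<le> t" "t \<le> 1" for t
  proof -
    have "x + t *\<^sub>R e = (1 - t) *\<^sub>R x + t *\<^sub>R (x + e)" by (simp add: algebra_simps)
    thus ?thesis using X(1) x xe that by (metis convex_def diff_ge_0_iff_ge le_add_diff_inverse2 add.commute)
  qed
  have D: "((\<lambda>t. F (x + t *\<^sub>R e)) has_real_derivative (DF (x + t *\<^sub>R e) \<bullet> e)) (at t)"
    if "0 \<le> t" "t \<le> 1" for t
  proof -
    have d1: "((\<lambda>t. x + t *\<^sub>R e) has_derivative (\<lambda>s. s *\<^sub>R e)) (at t)"
      by (auto intro!: derivative_eq_intros)
    have d2: "(F has_derivative (\<lambda>h. DF (x + t *\<^sub>R e) \<bullet> h)) (at (x + t *\<^sub>R e))"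
      using der inX[OF that] by blast
    have "((\<lambda>t. F (x + t *\<^sub>R e)) has_derivative (\<lambda>s. DF (x + t *\<^sub>R e) \<bullet> (s *\<^sub>R e))) (at t)"
      using has_derivative_compose[OF d1 d2] by simp
    moreover have "(\<lambda>s. DF (x + t *\<^sub>R e) \<bullet> (s *\<^sub>R e)) = (*) (DF (x + t *\<^sub>R e) \<bullet> e)"
      by (auto simp: fun_eq_iff)
    ultimately show ?thesis by (simp add: has_field_derivative_def)
  qed
  have gb: "\<bar>DF (x + t *\<^sub>R e) \<bullet> e - DF x \<bullet> e\<bar> \<le> L * t * (norm e)\<^sup>2" if "0 \<le> t" "t \<le> 1" for t
  proof -
    have "\<bar>DF (x + t *\<^sub>R e) \<bullet> e - DF x \<bullet> e\<bar> = \<bar>(DF (x + t *\<^sub>R e) - DF x) \<bullet> e\<bar>"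
      by (simp add: inner_diff_left)
    also have "\<dots> \<le> norm (DF (x + t *\<^sub>R e) - DF x) * norm e" by (rule Cauchy_Schwarz_ineq2)
    also have "norm (DF (x + t *\<^sub>R e) - DF x) \<le> L * norm (t *\<^sub>R e)"
      using lip inX[OF that] x unfolding lipschitz_on_def dist_norm by force
    hence "norm (DF (x + t *\<^sub>R e) - DF x) * norm e \<le> L * norm (t *\<^sub>R e) * norm e"
      by (simp add: mult_right_mono)
    also have "L * norm (t *\<^sub>R e) * norm e = L * t * (norm e)\<^sup>2" using that
      by (simp add: power2_eq_square)
    finally show ?thesis .
  qed
  define p where "p t = F (x + t *\<^sub>R e) - t * (DF x \<bullet> e) - L / 2 * t\<^sup>2 * (norm e)\<^sup>2" for t
  define q where "q t = F (x + t *\<^sub>R e) - t * (DF x \<bullet> e) + L / 2 * t\<^sup>2 * (norm e)\<^sup>2" for t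
  have "p 1 \<le> p 0"
  proof (rule DERIV_nonpos_imp_nonincreasing[of 0 1])
    fix t :: real assume t: "0 \<le> t" "t \<le> 1"
    have "(p has_real_derivative (DF (x + t *\<^sub>R e) \<bullet> e - DF x \<bullet> e - L * t * (norm e)\<^sup>2)) (at t)"
      unfolding p_def by (rule derivative_eq_intros D[OF t] refl | simp)+
    moreover have "DF (x + t *\<^sub>R e) \<bullet> e - DF x \<bullet> e - L * t * (norm e)\<^sup>2 \<le> 0" using gb[OF t] by linarith
    ultimately show "\<exists>y. (p has_real_derivative y) (at t) \<and> y \<le> 0" by blast
  qed simp
  moreover have "q 0 \<le> q 1"
  proof (rule DERIV_nonneg_imp_nondecreasing[of 0 1])
    fix t :: real assume t: "0 \<le> t" "t \<le> 1"
    have "(q has_real_derivative (DF (x + t *\<^sub>R e) \<bullet> e - DF x \<bullet> e + L * t * (norm e)\<^sup>2)) (at t)"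
      unfolding q_def by (rule derivative_eq_intros D[OF t] refl | simp)+
    moreover have "0 \<le> DF (x + t *\<^sub>R e) \<bullet> e - DF x \<bullet> e + L * t * (norm e)\<^sup>2" using gb[OF t] by linarith
    ultimately show "\<exists>y. (q has_real_derivative y) (at t) \<and> 0 \<le> y" by blast
  qed simp
  ultimately have "F (x + e) - F x - DF x \<bullet> e \<le> L / 2 * (norm e)\<^sup>2"
    "- (L / 2 * (norm e)\<^sup>2) \<le> F (x + e) - F x - DF x \<bullet> e"
    unfolding p_def q_def by simp_all
  thus ?thesis unfolding abs_le_iff by linarith
qed


lemma tdot: fixes J :: "real^'n^'m" shows "(transpose J *v w) \<bullet> z = w \<bullet> (J *v z)"
  by (metis transpose_matrix_vector dot_lmul_matrix)

lemma decomp: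
  fixes J :: "real^'n^'m" and c :: "real^'m"
  assumes s: "0 < s" and sv: "\<forall>v. s * norm v \<le> norm (transpose J *v v)"
  shows "\<exists>v. J *v v = c \<and> s * norm v \<le> norm c"
proof -
  let ?f = "\<lambda>w. J *v (transpose J *v w)"
  have "?f = (*v) (J ** transpose J)" by (rule ext) (metis matrix_vector_mul_assoc)
  hence lin: "linear ?f" using matrix_vector_mul_linear[of "J ** transpose J"] by simp
  have "inj ?f"
    unfolding linear_injective_0[OF lin]
  proof (intro allI impI)
    fix w assume "?f w = 0"
    hence "(transpose J *v w) \<bullet> (transpose J *v w) = 0" by (simp add: dot_lmul_matrix)
    hence "transpose J *v w = 0" by simp
    hence "s * norm w \<le> 0" using sv by (metis norm_zero)
    thus "w = 0" using s by (simp add: mult_le_0_iff)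
  qed
  hence "surj ?f" using linear_injective_imp_surjective[OF lin] by simp
  then obtain w where w: "?f w = c" by (metis surjD)
  define v where "v = transpose J *v w"
  have "norm v ^ 2 = w \<bullet> c" using w by (simp add: v_def dot_lmul_matrix power2_norm_eq_inner)
  also have "\<dots> \<le> norm w * norm c" by (rule Cauchy_Schwarz_ineq2[THEN order_trans[OF abs_ge_self]])
  finally have 1: "norm v ^ 2 \<le> norm w * norm c" .
  have 2: "s * norm w \<le> norm v" using sv v_def by simp
  have "s * norm v \<le> norm c"
  proof (cases "norm v = 0")
    case True thus ?thesis by simp
  next
    case False
    hence vp: "0 < norm v" by simp
    have "s * norm v ^ 2 \<le> s * norm w * norm c" using 1 s by (simp add: mult_left_mono mult.assoc)
    also have "\<dots> \<le> norm v * norm c" using 2 by (simp add: mult_right_mono)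
    finally have "norm v * (s * norm v) \<le> norm v * norm c" by (simp add: power2_eq_square algebra_simps)
    thus ?thesis using vp by simp
  qed
  thus ?thesis using w v_def by blast
qed


lemma Hbd: fixes H :: "real^'n^'n"
  assumes "\<forall>u. norm (H *v u) \<le> k * norm u"
  shows "\<bar>p \<bullet> (H *v q)\<bar> \<le> k * norm p * norm q"
proof -
  have "\<bar>p \<bullet> (H *v q)\<bar> \<le> norm p * norm (H *v q)" by (rule Cauchy_Schwarz_ineq2)
  also have "\<dots> \<le> norm p * (k * norm q)" using assms by (simp add: mult_left_mono)
  finally show ?thesis by (simp add: algebra_simps)
qed

lemma iter_bounds:
  fixes J :: "real^'n^'m" and H :: "real^'n^'n" and g d :: "real^'n" and y c :: "real^'m"
  assumes kH: "\<forall>u. norm (H *v u) \<le> k * norm u" and k0: "0 \<le> k"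
   and curv: "\<forall>u. J *v u = 0 \<longrightarrow> z * (norm u)\<^sup>2 \<le> u \<bullet> (H *v u)" and z0: "0 < z"
   and s0: "0 < s" and sv: "\<forall>v. s * norm v \<le> norm (transpose J *v v)"
   and e1: "H *v d + transpose J *v y = - g" and e2: "J *v d = - c"
   and G: "norm g \<le> G" and C: "norm c \<le> C"
  shows "g \<bullet> d + max (d \<bullet> (H *v d)) 0 \<le> (G + k * ((G + k * C / s) / z + C / s)) / s * norm c"
   and "(0 \<le> d \<bullet> (H *v d) \<and> z / 8 * (norm d)\<^sup>2 \<le> d \<bullet> (H *v d))
        \<or> (norm d)\<^sup>2 \<le> ((1 / min 1 (z / (6 * k + 1)) + 1) / s)\<^sup>2 * (norm c)\<^sup>2"
proof -
  obtain v where v: "J *v v = - c" and vb: "s * norm v \<le> norm c"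
    using decomp[OF s0 sv, of "- c"] by auto
  define u where "u = d - v"
  have d_eq: "d = u + v" by (simp add: u_def)
  have Ju: "J *v u = 0" using e2 v by (simp add: u_def matrix_vector_mult_diff_distrib)
  define a where "a = norm u"
  define b where "b = norm v"
  have a0: "0 \<le> a" and b0: "0 \<le> b" by (simp_all add: a_def b_def)
  have G0: "0 \<le> G" using G norm_ge_zero order_trans by blast
  have C0: "0 \<le> C" using C norm_ge_zero order_trans by blast
  have bc: "b \<le> norm c / s" using vb s0 by (simp add: b_def field_simps)
  have bC: "b \<le> C / s" using bc C s0 by (meson divide_right_mono less_imp_le order_trans)
  have hu: "z * a\<^sup>2 \<le> u \<bullet> (H *v u)" using curv Ju by (simp add: a_def)
  have uHd: "u \<bullet> (H *v d) = - (g \<bullet> u)"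
  proof -
    have "H *v d = - g - transpose J *v y" using e1 by (simp add: algebra_simps eq_neg_iff_add_eq_0)
    hence "u \<bullet> (H *v d) = - (u \<bullet> g) - u \<bullet> (transpose J *v y)" by (simp add: inner_diff_right)
    moreover have "u \<bullet> (transpose J *v y) = 0"
      using tdot[of J y u] Ju by (simp add: inner_commute)
    ultimately show ?thesis by (simp add: inner_commute)
  qed
  have Hd: "H *v d = H *v u + H *v v" by (simp add: d_eq matrix_vector_right_distrib)
  have gv: "\<bar>g \<bullet> v\<bar> \<le> G * b"
    using Cauchy_Schwarz_ineq2[of g v] mult_right_mono[OF G norm_ge_zero[of v]] unfolding b_def by linarith
  have gu: "\<bar>g \<bullet> u\<bar> \<le> G * a"
    using Cauchy_Schwarz_ineq2[of g u] mult_right_mono[OF G norm_ge_zero[of u]] unfolding a_def by linarith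
  have uHv: "\<bar>u \<bullet> (H *v v)\<bar> \<le> k * a * b" using Hbd[OF kH] by (simp add: a_def b_def)
  have vHu: "\<bar>v \<bullet> (H *v u)\<bar> \<le> k * a * b" using Hbd[OF kH, of v u] by (simp add: a_def b_def algebra_simps)
  have vHv: "\<bar>v \<bullet> (H *v v)\<bar> \<le> k * b * b" using Hbd[OF kH] by (simp add: b_def)
  have nd: "norm d \<le> a + b" using norm_triangle_ineq[of u v] by (simp add: d_eq a_def b_def)
  have vHd: "\<bar>v \<bullet> (H *v d)\<bar> \<le> k * b * (a + b)"
  proof -
    have "\<bar>v \<bullet> (H *v d)\<bar> \<le> k * b * norm d" using Hbd[OF kH, of v d] by (simp add: b_def)
    also have "\<dots> \<le> k * b * (a + b)" using nd k0 b0 by (simp add: mult_left_mono)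
    finally show ?thesis .
  qed
  define U where "U = (G + k * C / s) / z"
  have aU: "a \<le> U"
  proof -
    have "u \<bullet> (H *v u) = u \<bullet> (H *v d) - u \<bullet> (H *v v)" by (simp add: Hd inner_add_right)
    hence "z * a\<^sup>2 \<le> G * a + k * a * b" using hu uHd gu uHv by linarith
    hence "a * (z * a) \<le> a * (G + k * b)" by (simp add: power2_eq_square algebra_simps)
    hence za: "z * a \<le> G + k * b \<or> a = 0" using a0
      by (cases "a = 0") (simp_all add: mult_le_cancel_left_pos)
    have "G + k * b \<le> G + k * C / s" using mult_left_mono[OF bC k0] by simp
    moreover have "0 \<le> G + k * C / s" using G0 k0 C0 s0 by simp
    ultimately have "z * a \<le> G + k * C / s" using za by auto
    thus ?thesis unfolding U_def using z0 by (simp add: field_simps)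
  qed
  define K0 where "K0 = G + k * (U + C / s)"
  have U0: "0 \<le> U" using aU a0 by linarith
  have K00: "0 \<le> K0" unfolding K0_def using G0 k0 U0 C0 s0 by simp
  have gd: "g \<bullet> d = - (u \<bullet> (H *v d)) + g \<bullet> v" using uHd by (simp add: d_eq inner_add_right)
  have dHd: "d \<bullet> (H *v d) = u \<bullet> (H *v d) + v \<bullet> (H *v d)" by (simp add: d_eq inner_add_left)
  have abU: "a + b \<le> U + C / s" using aU bC by linarith
  have "g \<bullet> d + max (d \<bullet> (H *v d)) 0 \<le> b * K0"
  proof (cases "0 \<le> d \<bullet> (H *v d)")
    case True
    hence "g \<bullet> d + max (d \<bullet> (H *v d)) 0 = g \<bullet> v + v \<bullet> (H *v d)" using gd dHd by simp
    also have "\<dots> \<le> G * b + k * b * (a + b)" using gv vHd by linarith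
    also have "k * b * (a + b) \<le> k * b * (U + C / s)" using abU k0 b0 by (simp add: mult_left_mono)
    finally show ?thesis unfolding K0_def by (simp add: algebra_simps)
  next
    case False
    hence "g \<bullet> d + max (d \<bullet> (H *v d)) 0 = - (u \<bullet> (H *v u)) - u \<bullet> (H *v v) + g \<bullet> v"
      using gd by (simp add: Hd inner_add_right)
    also have "\<dots> \<le> k * a * b + G * b"
    proof -
      have "0 \<le> z * a\<^sup>2" using z0 by simp
      moreover have "- (u \<bullet> (H *v v)) \<le> k * a * b" using uHv by (simp add: abs_le_iff)
      moreover have "g \<bullet> v \<le> G * b" using gv by (simp add: abs_le_iff)
      ultimately show ?thesis using hu by linarith
    qed
    also have "k * a * b \<le> k * b * (U + C / s)"
    proof -
      have "a \<le> U + C / s" using aU C0 s0 by (smt (verit) divide_nonneg_pos)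
      moreover have "0 \<le> k * b" using k0 b0 by simp
      ultimately have "k * b * a \<le> k * b * (U + C / s)" by (rule mult_left_mono)
      thus ?thesis by (simp add: algebra_simps)
    qed
    finally show ?thesis unfolding K0_def by (simp add: algebra_simps)
  qed
  also have "b * K0 \<le> norm c / s * K0" using mult_right_mono[OF bc K00] by simp
  finally show "g \<bullet> d + max (d \<bullet> (H *v d)) 0 \<le> (G + k * ((G + k * C / s) / z + C / s)) / s * norm c"
    unfolding K0_def U_def by (simp add: field_simps)
  define dl where "dl = min 1 (z / (6 * k + 1))"
  have dl0: "0 < dl" using z0 k0 by (simp add: dl_def)
  have dl1: "dl \<le> 1" by (simp add: dl_def)
  have dlk: "6 * k * dl \<le> z"
  proof -
    have "dl \<le> z / (6 * k + 1)" unfolding dl_def by simp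
    hence "dl * (6 * k + 1) \<le> z" using k0 by (simp add: pos_le_divide_eq)
    thus ?thesis using dl0 by (simp add: algebra_simps)
  qed
  show "(0 \<le> d \<bullet> (H *v d) \<and> z / 8 * (norm d)\<^sup>2 \<le> d \<bullet> (H *v d))
        \<or> (norm d)\<^sup>2 \<le> ((1 / min 1 (z / (6 * k + 1)) + 1) / s)\<^sup>2 * (norm c)\<^sup>2"
  proof (cases "b \<le> dl * a")
    case True
    have ab: "a * b \<le> dl * a\<^sup>2" using True a0 by (simp add: power2_eq_square mult_left_mono mult.assoc mult.left_commute)
    have ba: "b \<le> a" using True mult_left_le_one_le[OF a0 _ dl1] dl0 by linarith
    have "b * b \<le> a * b" using ba b0 by (rule mult_right_mono)
    hence bb: "b * b \<le> dl * a\<^sup>2" using ab by linarith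
    have "d \<bullet> (H *v d) = u \<bullet> (H *v u) + u \<bullet> (H *v v) + v \<bullet> (H *v u) + v \<bullet> (H *v v)"
      by (simp add: d_eq inner_add_left inner_add_right matrix_vector_right_distrib)
    hence "d \<bullet> (H *v d) \<ge> z * a\<^sup>2 - k * a * b - k * a * b - k * b * b" using hu uHv vHu vHv by linarith
    moreover have "k * a * b \<le> k * (dl * a\<^sup>2)" using ab k0 by (simp add: mult_left_mono mult.assoc)
    moreover have "k * b * b \<le> k * (dl * a\<^sup>2)" using bb k0 by (simp add: mult_left_mono mult.assoc)
    moreover have "3 * (k * (dl * a\<^sup>2)) \<le> z / 2 * a\<^sup>2"
    proof -
      have "(6 * k * dl) * a\<^sup>2 \<le> z * a\<^sup>2" using dlk by (simp add: mult_right_mono)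
      moreover have "3 * (k * (dl * a\<^sup>2)) = (6 * k * dl) * a\<^sup>2 / 2" by simp
      moreover have "z / 2 * a\<^sup>2 = z * a\<^sup>2 / 2" by simp
      ultimately show ?thesis by linarith
    qed
    ultimately have dH: "d \<bullet> (H *v d) \<ge> z / 2 * a\<^sup>2" by linarith
    have "norm d \<le> 2 * a" using nd ba by linarith
    hence "(norm d)\<^sup>2 \<le> (2 * a)\<^sup>2" by (rule power_mono[OF _ norm_ge_zero])
    hence "z / 8 * (norm d)\<^sup>2 \<le> z / 2 * a\<^sup>2" using z0 by (simp add: power2_eq_square)
    moreover have "0 \<le> z / 2 * a\<^sup>2" using z0 by simp
    ultimately show ?thesis using dH by (intro disjI1 conjI) linarith+
  next
    case False
    hence "a < b / dl" using dl0 by (simp add: field_simps)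
    hence "norm d \<le> (1 / dl + 1) * b" using nd by (simp add: field_simps)
    also have "\<dots> \<le> (1 / dl + 1) * (norm c / s)" using mult_left_mono[OF bc, of "1 / dl + 1"] dl0 by simp
    finally have "norm d \<le> (1 / dl + 1) / s * norm c" by simp
    hence "(norm d)\<^sup>2 \<le> ((1 / dl + 1) / s * norm c)\<^sup>2" by (rule power_mono[OF _ norm_ge_zero])
    hence "(norm d)\<^sup>2 \<le> ((1 / dl + 1) / s)\<^sup>2 * (norm c)\<^sup>2" by (simp only: power_mult_distrib)
    thus ?thesis unfolding dl_def by (rule disjI2)
  qed
qed


lemma f_descent:
  fixes F :: "real^'n \<Rightarrow> real" and DF :: "real^'n \<Rightarrow> real^'n"
  assumes X: "convex X" "open X"
    and der: "\<forall>z\<in>X. (F has_derivative (\<lambda>h. DF z \<bullet> h)) (at z)"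
    and lip: "L-lipschitz_on X DF"
    and x: "x \<in> X" and xe: "x + a *\<^sub>R d \<in> X"
  shows "F (x + a *\<^sub>R d) \<le> F x + a * (DF x \<bullet> d) + (1/2) * L * a\<^sup>2 * (norm d)\<^sup>2"
    and "\<bar>F (x + a *\<^sub>R d)\<bar> \<le> \<bar>F x + a * (DF x \<bullet> d)\<bar> + (1/2) * L * a\<^sup>2 * (norm d)\<^sup>2"
proof -
  have t: "\<bar>F (x + a *\<^sub>R d) - F x - DF x \<bullet> (a *\<^sub>R d)\<bar> \<le> L / 2 * (norm (a *\<^sub>R d))\<^sup>2"
    by (rule taylor_bound[OF X der lip x xe])
  have n2: "(norm (a *\<^sub>R d))\<^sup>2 = a\<^sup>2 * (norm d)\<^sup>2" by (simp add: power_mult_distrib power2_abs)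
  have i: "DF x \<bullet> (a *\<^sub>R d) = a * (DF x \<bullet> d)" by simp
  have e: "L / 2 * (a\<^sup>2 * (norm d)\<^sup>2) = (1/2) * L * a\<^sup>2 * (norm d)\<^sup>2" by simp
  have t': "\<bar>F (x + a *\<^sub>R d) - F x - a * (DF x \<bullet> d)\<bar> \<le> (1/2) * L * a\<^sup>2 * (norm d)\<^sup>2"
    using t unfolding n2 i e .
  show "F (x + a *\<^sub>R d) \<le> F x + a * (DF x \<bullet> d) + (1/2) * L * a\<^sup>2 * (norm d)\<^sup>2"
    using t' unfolding abs_le_iff by linarith
  have "\<bar>F (x + a *\<^sub>R d)\<bar> \<le> \<bar>F x + a * (DF x \<bullet> d)\<bar> + \<bar>F (x + a *\<^sub>R d) - F x - a * (DF x \<bullet> d)\<bar>"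
    using abs_triangle_ineq[of "F x + a * (DF x \<bullet> d)" "F (x + a *\<^sub>R d) - F x - a * (DF x \<bullet> d)"] by simp
  thus "\<bar>F (x + a *\<^sub>R d)\<bar> \<le> \<bar>F x + a * (DF x \<bullet> d)\<bar> + (1/2) * L * a\<^sup>2 * (norm d)\<^sup>2"
    using t' by linarith
qed

lemma comp_deriv:
  fixes c :: "real^'n \<Rightarrow> real^'m" and Jc :: "real^'n \<Rightarrow> real^'n^'m"
  assumes "(c has_derivative (\<lambda>h. Jc z *v h)) (at z)"
  shows "((\<lambda>z. c z $ i) has_derivative (\<lambda>h. Jc z $ i \<bullet> h)) (at z)"
  using bounded_linear.has_derivative[OF bounded_linear_vec_nth[of i] assms]
  by (simp add: matrix_vector_mul_component)

lemma tau_upd: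
  fixes cx :: "real^'m" and g d :: "real^'n" and H :: "real^'n^'n"
  assumes tp: "0 < tp" and sK: "g \<bullet> d + max (d \<bullet> (H *v d)) 0 \<le> K * l1norm cx" and K0: "0 \<le> K"
    and sg: "0 < sgm" "sgm < 1" and ep: "0 < eps" "eps < 1" and l10: "0 \<le> l1norm cx"
  shows "min tp ((1 - eps) * (1 - sgm) / (K + 1)) \<le> tau_update sgm eps tp cx g H d"
    and "tau_update sgm eps tp cx g H d \<le> tp"
    and "0 < g \<bullet> d + max (d \<bullet> (H *v d)) 0 \<Longrightarrow>
         tau_update sgm eps tp cx g H d * (g \<bullet> d + max (d \<bullet> (H *v d)) 0) \<le> (1 - sgm) * l1norm cx"
proof -
  define s where "s = g \<bullet> d + max (d \<bullet> (H *v d)) 0"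
  define l where "l = l1norm cx"
  define tr where "tr = (1 - sgm) * l / s"
  have tu: "tau_update sgm eps tp cx g H d = (if s \<le> 0 then tp else if tp \<le> tr then tp else (1 - eps) * tr)"
    unfolding tau_update_def s_def tr_def l_def Let_def by simp
  have P: "min tp ((1 - eps) * (1 - sgm) / (K + 1)) \<le> tau_update sgm eps tp cx g H d
        \<and> tau_update sgm eps tp cx g H d \<le> tp
        \<and> (0 < s \<longrightarrow> tau_update sgm eps tp cx g H d * s \<le> (1 - sgm) * l)"
  proof (cases "s \<le> 0")
    case True thus ?thesis using tu by simp
  next
    case False
    hence s0: "0 < s" by simp
    have sK': "s \<le> K * l" using sK unfolding s_def l_def .
    have lpos: "0 < l" using s0 sK' K0 l10 unfolding l_def
      by (metis mult_nonneg_nonpos not_le order.strict_trans2 l_def)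
    have "s \<le> (K + 1) * l" using sK' lpos by (simp add: algebra_simps)
    hence "(1 - sgm) * l / ((K + 1) * l) \<le> (1 - sgm) * l / s"
      using s0 lpos sg K0 by (intro divide_left_mono) simp_all
    hence trb: "(1 - sgm) / (K + 1) \<le> tr" unfolding tr_def using lpos by simp
    have tr0: "0 \<le> tr" unfolding tr_def using s0 lpos sg by simp
    have trs: "tr * s = (1 - sgm) * l" unfolding tr_def using s0 by simp
    show ?thesis
    proof (cases "tp \<le> tr")
      case True
      have "tp * s \<le> tr * s" using True s0 by (simp add: mult_right_mono)
      thus ?thesis using tu False True trs by simp
    next
      case F2: False
      have a: "(1 - eps) * ((1 - sgm) / (K + 1)) \<le> (1 - eps) * tr" using mult_left_mono[OF trb, of "1 - eps"] ep by simp
      have b: "(1 - eps) * tr \<le> tr" using tr0 ep by (simp add: mult_left_le_one_le)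
      have c: "(1 - eps) * tr * s \<le> tr * s" using b s0 by (simp add: mult_right_mono)
      show ?thesis using tu False F2 a b c trs by (simp add: min_le_iff_disj)
    qed
  qed
  thus "min tp ((1 - eps) * (1 - sgm) / (K + 1)) \<le> tau_update sgm eps tp cx g H d"
    and "tau_update sgm eps tp cx g H d \<le> tp"
    and "0 < g \<bullet> d + max (d \<bullet> (H *v d)) 0 \<Longrightarrow>
         tau_update sgm eps tp cx g H d * (g \<bullet> d + max (d \<bullet> (H *v d)) 0) \<le> (1 - sgm) * l1norm cx"
    unfolding s_def l_def by auto
qed

lemma dq_lower:
  fixes cx :: "real^'m" and g d :: "real^'n" and H :: "real^'n^'n"
  assumes t: "0 < t" and ts: "0 < g \<bullet> d + max (d \<bullet> (H *v d)) 0 \<Longrightarrow>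
         t * (g \<bullet> d + max (d \<bullet> (H *v d)) 0) \<le> (1 - sgm) * l1norm cx"
    and l10: "0 \<le> l1norm cx" and sg: "0 < sgm" "sgm < 1"
  shows "sgm * l1norm cx + t / 2 * max (d \<bullet> (H *v d)) 0 \<le> Delta_q cx t g H d"
proof -
  define s where "s = g \<bullet> d + max (d \<bullet> (H *v d)) 0"
  define m where "m = max (d \<bullet> (H *v d)) 0"
  have dq: "Delta_q cx t g H d = - t * s + t / 2 * max (d \<bullet> (H *v d)) 0 + l1norm cx"
    unfolding Delta_q_def s_def by (simp add: algebra_simps)
  show ?thesis
  proof (cases "0 < s")
    case True
    hence "t * s \<le> (1 - sgm) * l1norm cx" using ts s_def by simp
    thus ?thesis using dq m_def by (simp add: algebra_simps)
  next
    case False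
    hence "0 \<le> - t * s" using t by (simp add: mult_nonneg_nonpos)
    moreover have "sgm * l1norm cx \<le> l1norm cx" using sg l10 by (simp add: mult_left_le_one_le)
    ultimately show ?thesis using dq m_def by linarith
  qed
qed

lemma ladder:
  fixes Lk :: "nat \<Rightarrow> nat \<Rightarrow> real" and jacc :: "nat \<Rightarrow> nat" and P :: "nat \<Rightarrow> nat \<Rightarrow> bool"
  assumes i0: "0 < Lk 0 0" "Lk 0 0 \<le> Lm1"
    and iS: "\<forall>k. 0 < Lk (Suc k) 0 \<and> Lk (Suc k) 0 \<le> Lk k (jacc k)"
    and up: "\<forall>k j. j < jacc k \<longrightarrow> Lk k (Suc j) = (if P k j then Lk k j else rho * Lk k j)"
    and ok: "\<forall>k j. j < jacc k \<longrightarrow> Lf \<le> Lk k j \<longrightarrow> P k j"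
    and rho: "1 < rho"
  shows "\<forall>k j. j \<le> jacc k \<longrightarrow> 0 < Lk k j \<and> Lk k j \<le> max Lm1 (rho * Lf)"
proof -
  let ?M = "max Lm1 (rho * Lf)"
  have inner: "\<forall>j. j \<le> jacc k \<longrightarrow> 0 < Lk k j \<and> Lk k j \<le> ?M"
    if h: "0 < Lk k 0" "Lk k 0 \<le> ?M" for k
  proof
    fix j show "j \<le> jacc k \<longrightarrow> 0 < Lk k j \<and> Lk k j \<le> ?M"
    proof (induction j)
      case 0 thus ?case using h by simp
    next
      case (Suc j)
      show ?case
      proof
        assume jl: "Suc j \<le> jacc k"
        hence jl': "j < jacc k" by simp
        with Suc have IH: "0 < Lk k j" "Lk k j \<le> ?M" by auto
        show "0 < Lk k (Suc j) \<and> Lk k (Suc j) \<le> ?M"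
        proof (cases "P k j")
          case True thus ?thesis using up jl' IH by simp
        next
          case False
          hence "Lk k j < Lf" using ok jl' by force
          hence "rho * Lk k j < rho * Lf" using rho by simp
          moreover have "0 < rho * Lk k j" using IH rho by simp
          ultimately show ?thesis using up jl' False by auto
        qed
      qed
    qed
  qed
  have "0 < Lk k 0 \<and> Lk k 0 \<le> ?M" for k
  proof (induction k)
    case 0 thus ?case using i0 by simp
  next
    case (Suc k)
    hence "Lk k (jacc k) \<le> ?M" using inner by blast
    thus ?case using iS by (meson order_trans)
  qed
  thus ?thesis using inner by blast
qed

lemma alg1_step_lb:
  assumes eta: "0 < eta" "eta < 1" and Lam: "0 < Lam" "Lam \<le> Lmax" and nd: "0 < nd2"
    and dq: "kq * nd2 \<le> dq" and kq: "0 < kq"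
  shows "min 1 (2 * (1 - eta) * kq / Lmax) \<le> alg1_step eta dq c1 Lam nd2"
proof -
  define ah where "ah = 2 * (1 - eta) * dq / (Lam * nd2)"
  define atl where "atl = ah - 4 * c1 / (Lam * nd2)"
  have st: "alg1_step eta dq c1 Lam nd2 = (if ah < 1 then ah else if atl \<le> 1 \<and> 1 \<le> ah then 1 else atl)"
    unfolding alg1_step_def ah_def atl_def Let_def by simp
  have "2 * (1 - eta) * kq / Lmax \<le> ah"
  proof -
    have Lm: "0 < Lmax" using Lam by simp
    have "2 * (1 - eta) * kq / Lmax = 2 * (1 - eta) * (kq * nd2) / (Lmax * nd2)" using nd by simp
    also have "\<dots> \<le> 2 * (1 - eta) * dq / (Lmax * nd2)"
      using dq eta Lm nd by (intro divide_right_mono mult_left_mono) simp_all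
    also have "\<dots> \<le> 2 * (1 - eta) * dq / (Lam * nd2)"
    proof (rule divide_left_mono)
      show "0 \<le> 2 * (1 - eta) * dq" using dq kq nd eta by (simp add: order_trans[OF _ dq])
      show "Lam * nd2 \<le> Lmax * nd2" using Lam nd by simp
      show "0 < Lmax * nd2 * (Lam * nd2)" using Lam nd by simp
    qed
    finally show ?thesis unfolding ah_def .
  qed
  thus ?thesis using st by (auto simp: min_le_iff_disj)
qed

lemma alg2_lb:
  fixes SD :: "real \<Rightarrow> bool" and inX :: "real \<Rightarrow> bool"
  assumes nu: "0 < nu" "nu < 1" and ab: "0 < abar"
    and al: "alpha = nu ^ j * abar"
    and notSD: "\<forall>i < j. \<not> SD (nu ^ i * abar)"
    and inx: "\<forall>i \<le> j. inX (nu ^ i * abar)"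
    and good: "\<And>a. 0 < a \<Longrightarrow> a \<le> a0 \<Longrightarrow> inX a \<Longrightarrow> SD a"
  shows "min abar (nu * a0) \<le> alpha"
proof (cases j)
  case 0 thus ?thesis using al by simp
next
  case (Suc i)
  have "\<not> SD (nu ^ i * abar)" using notSD Suc by simp
  moreover have "inX (nu ^ i * abar)" using inx Suc by simp
  moreover have "0 < nu ^ i * abar" using nu ab by simp
  ultimately have "a0 < nu ^ i * abar" using good by force
  hence "nu * a0 \<le> nu * (nu ^ i * abar)" using nu by simp
  thus ?thesis using al Suc by (simp add: min_le_iff_disj mult.assoc)
qed


lemma merit_descent:
  fixes f :: "real^'n \<Rightarrow> real" and gf :: "real^'n \<Rightarrow> real^'n"
    and c :: "real^'n \<Rightarrow> real^'m" and Jc :: "real^'n \<Rightarrow> real^'n^'m" and H :: "real^'n^'n"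
  assumes X: "convex X" "open X"
    and f_deriv: "\<forall>z\<in>X. (f has_derivative (\<lambda>h. gf z \<bullet> h)) (at z)"
    and gf_lip: "Lf-lipschitz_on X gf"
    and c_deriv: "\<forall>z\<in>X. (c has_derivative (\<lambda>h. Jc z *v h)) (at z)"
    and gradc_lip: "\<forall>i. (gam i)-lipschitz_on X (\<lambda>z. Jc z $ i)"
    and x: "x \<in> X" and xa: "x + a *\<^sub>R d \<in> X" and Jd: "Jc x *v d = - c x"
    and a: "0 \<le> a" "a \<le> 1" and t: "0 < t"
  shows "merit f c (x + a *\<^sub>R d) t \<le> merit f c x t - a * Delta_q (c x) t (gf x) H d
           + (1/2) * (t * Lf + (\<Sum>i\<in>UNIV. gam i)) * a\<^sup>2 * (norm d)\<^sup>2"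
proof -
  let ?n = "(norm d)\<^sup>2"
  have hf: "f (x + a *\<^sub>R d) \<le> f x + a * (gf x \<bullet> d) + (1/2) * Lf * a\<^sup>2 * ?n"
    by (rule f_descent(1)[OF X f_deriv gf_lip x xa])
  have hc: "\<bar>c (x + a *\<^sub>R d) $ i\<bar> \<le> (1 - a) * \<bar>c x $ i\<bar> + (1/2) * gam i * a\<^sup>2 * ?n" for i
  proof -
    have der: "\<forall>z\<in>X. ((\<lambda>z. c z $ i) has_derivative (\<lambda>h. Jc z $ i \<bullet> h)) (at z)"
      using c_deriv comp_deriv by blast
    have "\<bar>c (x + a *\<^sub>R d) $ i\<bar> \<le> \<bar>c x $ i + a * (Jc x $ i \<bullet> d)\<bar> + (1/2) * gam i * a\<^sup>2 * ?n"
      by (rule f_descent(2)[OF X der gradc_lip[rule_format] x xa])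
    moreover have "Jc x $ i \<bullet> d = - (c x $ i)" using Jd
      by (metis matrix_vector_mul_component vector_uminus_component)
    moreover have "\<bar>c x $ i + a * (- (c x $ i))\<bar> = (1 - a) * \<bar>c x $ i\<bar>"
    proof -
      have "c x $ i + a * (- (c x $ i)) = (1 - a) * c x $ i" by (simp add: algebra_simps)
      thus ?thesis using a by (simp add: abs_mult)
    qed
    ultimately show ?thesis by simp
  qed
  have hl: "l1norm (c (x + a *\<^sub>R d)) \<le> (1 - a) * l1norm (c x) + (1/2) * (\<Sum>i\<in>UNIV. gam i) * a\<^sup>2 * ?n"
  proof -
    have "l1norm (c (x + a *\<^sub>R d)) \<le> (\<Sum>i\<in>UNIV. (1 - a) * \<bar>c x $ i\<bar> + (1/2) * gam i * a\<^sup>2 * ?n)"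
      unfolding l1norm_def by (rule sum_mono) (rule hc)
    also have "\<dots> = (1 - a) * l1norm (c x) + (1/2) * (\<Sum>i\<in>UNIV. gam i) * a\<^sup>2 * ?n"
      unfolding l1norm_def by (simp add: sum.distrib sum_distrib_left sum_distrib_right)
    finally show ?thesis .
  qed
  have m0: "0 \<le> a * t * max (d \<bullet> (H *v d)) 0" using a t by simp
  have "merit f c (x + a *\<^sub>R d) t \<le> t * (f x + a * (gf x \<bullet> d) + (1/2) * Lf * a\<^sup>2 * ?n)
          + (1 - a) * l1norm (c x) + (1/2) * (\<Sum>i\<in>UNIV. gam i) * a\<^sup>2 * ?n"
  proof -
    have "t * f (x + a *\<^sub>R d) \<le> t * (f x + a * (gf x \<bullet> d) + (1/2) * Lf * a\<^sup>2 * ?n)"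
      by (rule mult_left_mono[OF hf]) (use t in simp)
    thus ?thesis unfolding merit_def using hl by linarith
  qed
  also have "\<dots> \<le> merit f c x t - a * Delta_q (c x) t (gf x) H d
           + (1/2) * (t * Lf + (\<Sum>i\<in>UNIV. gam i)) * a\<^sup>2 * ?n"
    unfolding merit_def Delta_q_def using m0 by (simp add: algebra_simps)
  finally show ?thesis .
qed


definition akj1 where
  "akj1 eta (c :: real^'n \<Rightarrow> real^'m) gf (x :: nat \<Rightarrow> real^'n) H d tau Lk (Gk :: nat \<Rightarrow> nat \<Rightarrow> real^'m) k j =
     alg1_step eta (Delta_q (c (x k)) (tau k) (gf (x k)) (H k) (d k))
       (l1norm (c (x k))) (tau k * Lk k j + (\<Sum>i\<in>UNIV. Gk k j $ i)) ((norm (d k))\<^sup>2)"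

theorem lemma2p17:
  fixes f :: "real^'n \<Rightarrow> real" and gf :: "real^'n \<Rightarrow> real^'n"
    and c :: "real^'n \<Rightarrow> real^'m" and Jc :: "real^'n \<Rightarrow> real^'n^'m"
    and X :: "(real^'n) set"
    and Lf :: real and gam :: "'m \<Rightarrow> real" and kappaH zeta :: real
    and tau_m1 sgm eps eta :: real
    and x d :: "nat \<Rightarrow> real^'n" and y :: "nat \<Rightarrow> real^'m" and H :: "nat \<Rightarrow> real^'n^'n"
    and tau alpha :: "nat \<Rightarrow> real"
  assumes
    \<comment> \<open>Standing Assumption\<close>
    X_open: "open X" and X_convex: "convex X" and iter_in_X: "\<forall>k. x k \<in> X"
    and f_deriv: "\<forall>z\<in>X. (f has_derivative (\<lambda>h. gf z \<bullet> h)) (at z)"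
    and gf_cont: "continuous_on X gf"
    and f_bdd_below: "\<exists>flow. \<forall>z\<in>X. flow \<le> f z"
    and gf_bdd: "bounded (gf ` X)"
    and gf_lip: "Lf-lipschitz_on X gf"
    and c_deriv: "\<forall>z\<in>X. (c has_derivative (\<lambda>h. Jc z *v h)) (at z)"
    and c_bdd: "bounded (c ` X)" and Jc_bdd: "bounded (Jc ` X)"
    and gradc_lip: "\<forall>i. (gam i)-lipschitz_on X (\<lambda>z. Jc z $ i)"
    and sing_vals: "\<exists>s>0. \<forall>z\<in>X. \<forall>v. s * norm v \<le> norm (transpose (Jc z) *v v)"
    \<comment> \<open>Matrix Assumption\<close>
    and H_sym: "\<forall>k. transpose (H k) = H k"
    and H_bdd: "\<forall>k. onorm (\<lambda>u. H k *v u) \<le> kappaH"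
    and zeta_pos: "0 < zeta"
    and H_curv: "\<forall>k u. Jc (x k) *v u = 0 \<longrightarrow> zeta * (norm u)\<^sup>2 \<le> u \<bullet> (H k *v u)"
    \<comment> \<open>parameters and common iteration\<close>
    and tau_m1_pos: "0 < tau_m1" and sgm: "0 < sgm" "sgm < 1"
    and eps: "0 < eps" "eps < 1" and eta: "0 < eta" "eta < 1"
    and iteration: "common_iteration f gf c Jc tau_m1 sgm eps x H d y tau alpha"
    \<comment> \<open>no finite termination\<close>
    and no_stop: "\<forall>k. \<not> (gf (x k) + transpose (Jc (x k)) *v y k = 0 \<and> c (x k) = 0)"
    \<comment> \<open>stepsizes generated by Algorithm 1 or Algorithm 2\<close>
    and alg: "alg1_run f gf c Jc X eta x H d tau alpha \<or> alg2_run f gf c X eta x H d tau alpha"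
  shows "\<exists>alpha_min > 0. \<forall>k. alpha_min \<le> alpha k"
proof -
  obtain s0 where s0: "0 < s0" and sv: "\<forall>z\<in>X. \<forall>v. s0 * norm v \<le> norm (transpose (Jc z) *v v)"
    using sing_vals by blast
  obtain G where G: "\<forall>z\<in>X. norm (gf z) \<le> G" using gf_bdd unfolding bounded_iff by blast
  obtain C where C: "\<forall>z\<in>X. norm (c z) \<le> C" using c_bdd unfolding bounded_iff by blast
  have G0: "0 \<le> G" using G iter_in_X norm_ge_zero order_trans by blast
  have C0: "0 \<le> C" using C iter_in_X norm_ge_zero order_trans by blast
  have kH: "\<forall>u. norm (H k *v u) \<le> kappaH * norm u" for k
  proof
    fix u
    have "norm (H k *v u) \<le> onorm ((*v) (H k)) * norm u"
      by (rule onorm[OF matrix_vector_mul_bounded_linear])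
    also have "\<dots> \<le> kappaH * norm u" using H_bdd by (simp add: mult_right_mono)
    finally show "norm (H k *v u) \<le> kappaH * norm u" .
  qed
  have k0: "0 \<le> kappaH" using onorm_pos_le[OF matrix_vector_mul_bounded_linear] H_bdd order_trans by blast
  have it: "H k *v d k + transpose (Jc (x k)) *v y k = - gf (x k)"
     "Jc (x k) *v d k = - c (x k)"
     "tau k = tau_update sgm eps (if k = 0 then tau_m1 else tau (k - 1)) (c (x k)) (gf (x k)) (H k) (d k)"
    for k using iteration unfolding common_iteration_def by auto
  define K where "K = (G + kappaH * ((G + kappaH * C / s0) / zeta + C / s0)) / s0"
  define M where "M = ((1 / min 1 (zeta / (6 * kappaH + 1)) + 1) / s0)\<^sup>2"
  define sk where "sk k = gf (x k) \<bullet> d k + max (d k \<bullet> (H k *v d k)) 0" for k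
  have IB1: "sk k \<le> K * norm (c (x k))"
   and IB2: "(0 \<le> d k \<bullet> (H k *v d k) \<and> zeta / 8 * (norm (d k))\<^sup>2 \<le> d k \<bullet> (H k *v d k))
        \<or> (norm (d k))\<^sup>2 \<le> M * (norm (c (x k)))\<^sup>2" for k
  proof -
    have curvk: "\<forall>u. Jc (x k) *v u = 0 \<longrightarrow> zeta * (norm u)\<^sup>2 \<le> u \<bullet> (H k *v u)" using H_curv by blast
    have svk: "\<forall>v. s0 * norm v \<le> norm (transpose (Jc (x k)) *v v)" using sv iter_in_X by blast
    have Gk: "norm (gf (x k)) \<le> G" using G iter_in_X by blast
    have Ck: "norm (c (x k)) \<le> C" using C iter_in_X by blast
    note ib = iter_bounds[OF kH k0 curvk zeta_pos s0 svk it(1) it(2) Gk Ck]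
    show "sk k \<le> K * norm (c (x k))" using ib(1) unfolding K_def sk_def by simp
    show "(0 \<le> d k \<bullet> (H k *v d k) \<and> zeta / 8 * (norm (d k))\<^sup>2 \<le> d k \<bullet> (H k *v d k))
        \<or> (norm (d k))\<^sup>2 \<le> M * (norm (c (x k)))\<^sup>2" using ib(2) unfolding M_def .
  qed
  have K0: "0 \<le> K" unfolding K_def using G0 C0 k0 s0 zeta_pos by simp
  have M0: "0 \<le> M" unfolding M_def by simp
  have l1: "norm (c (x k)) \<le> l1norm (c (x k))" for k by (simp add: l1norm_def norm_le_l1_cart)
  have l10: "0 \<le> l1norm (c (x k))" for k using l1[of k] norm_ge_zero order_trans by blast
  have sK: "sk k \<le> K * l1norm (c (x k))" for k
    using IB1[of k] mult_left_mono[OF l1[of k] K0] by linarith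
  define tmin where "tmin = min tau_m1 ((1 - eps) * (1 - sgm) / (K + 1))"
  have tmin0: "0 < tmin" unfolding tmin_def using tau_m1_pos eps sgm K0 by simp
  have TB: "tmin \<le> tau k \<and> tau k \<le> tau_m1" for k
  proof (induction k)
    case 0
    have "min tau_m1 ((1 - eps) * (1 - sgm) / (K + 1)) \<le> tau_update sgm eps tau_m1 (c (x 0)) (gf (x 0)) (H 0) (d 0)"
      "tau_update sgm eps tau_m1 (c (x 0)) (gf (x 0)) (H 0) (d 0) \<le> tau_m1"
      using tau_upd[OF tau_m1_pos sK[unfolded sk_def] K0 sgm eps l10] by auto
    thus ?case using it(3)[of 0] unfolding tmin_def by simp
  next
    case (Suc k)
    hence tp: "0 < tau k" using tmin0 by linarith
    have "min (tau k) ((1 - eps) * (1 - sgm) / (K + 1)) \<le> tau (Suc k)"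
      "tau (Suc k) \<le> tau k"
      using tau_upd[OF tp sK[unfolded sk_def] K0 sgm eps l10] it(3)[of "Suc k"] by auto
    thus ?case using Suc unfolding tmin_def by (auto simp: min_le_iff_disj)
  qed
  have tpos: "0 < tau k" for k using TB[of k] tmin0 by linarith
  have TS: "0 < sk k \<Longrightarrow> tau k * sk k \<le> (1 - sgm) * l1norm (c (x k))" for k
  proof -
    assume "0 < sk k"
    have pp: "0 < (if k = 0 then tau_m1 else tau (k - 1))" using tpos tau_m1_pos by simp
    show ?thesis using tau_upd(3)[OF pp sK[unfolded sk_def] K0 sgm eps l10] it(3)[of k] \<open>0 < sk k\<close>
      unfolding sk_def by simp
  qed
  have DQ: "sgm * l1norm (c (x k)) + tau k / 2 * max (d k \<bullet> (H k *v d k)) 0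
      \<le> Delta_q (c (x k)) (tau k) (gf (x k)) (H k) (d k)" for k
    by (rule dq_lower[OF tpos TS[unfolded sk_def] l10 sgm])
  define kq where "kq = min (tmin * zeta / 16) (sgm / (M * C + 1))"
  have MC: "0 < M * C + 1" using M0 C0 by (simp add: add_nonneg_pos)
  have kq0: "0 < kq" unfolding kq_def using tmin0 zeta_pos sgm MC by simp
  have KQ: "kq * (norm (d k))\<^sup>2 \<le> Delta_q (c (x k)) (tau k) (gf (x k)) (H k) (d k)" for k
  proof -
    let ?n = "(norm (d k))\<^sup>2"
    let ?m = "max (d k \<bullet> (H k *v d k)) 0"
    have s0': "0 \<le> sgm * l1norm (c (x k))" using sgm l10 by simp
    have m0: "0 \<le> tau k / 2 * ?m" using tpos[of k] by simp
    from IB2[of k] show ?thesis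
    proof
      assume h: "0 \<le> d k \<bullet> (H k *v d k) \<and> zeta / 8 * ?n \<le> d k \<bullet> (H k *v d k)"
      hence "?m = d k \<bullet> (H k *v d k)" by simp
      hence "tau k / 2 * (zeta / 8 * ?n) \<le> tau k / 2 * ?m" using h tpos[of k] by (simp add: mult_left_mono)
      moreover have "tmin / 2 * (zeta / 8 * ?n) \<le> tau k / 2 * (zeta / 8 * ?n)"
        using TB[of k] zeta_pos by (intro mult_right_mono) simp_all
      moreover have "kq * ?n \<le> tmin / 2 * (zeta / 8 * ?n)"
      proof -
        have "kq \<le> tmin * zeta / 16" unfolding kq_def by (rule min.cobounded1)
        hence "kq * ?n \<le> tmin * zeta / 16 * ?n" by (rule mult_right_mono) simp
        moreover have "tmin * zeta / 16 * ?n = tmin / 2 * (zeta / 8 * ?n)" by simp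
        ultimately show ?thesis by linarith
      qed
      ultimately show ?thesis using DQ[of k] s0' by linarith
    next
      assume h: "?n \<le> M * (norm (c (x k)))\<^sup>2"
      have "(norm (c (x k)))\<^sup>2 \<le> C * l1norm (c (x k))"
      proof -
        have "(norm (c (x k)))\<^sup>2 = norm (c (x k)) * norm (c (x k))" by (simp add: power2_eq_square)
        also have "\<dots> \<le> C * l1norm (c (x k))"
          using C iter_in_X l1[of k] C0 by (intro mult_mono) auto
        finally show ?thesis .
      qed
      hence "?n \<le> M * (C * l1norm (c (x k)))" using h mult_left_mono M0 by (meson order_trans)
      also have "\<dots> \<le> (M * C + 1) * l1norm (c (x k))" using l10[of k] by (simp add: algebra_simps)
      finally have hn: "?n \<le> (M * C + 1) * l1norm (c (x k))" .
      have "kq * ?n \<le> sgm / (M * C + 1) * ?n" unfolding kq_def by (intro mult_right_mono) simp_all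
      also have "\<dots> \<le> sgm / (M * C + 1) * ((M * C + 1) * l1norm (c (x k)))"
        using hn sgm MC by (intro mult_left_mono) simp_all
      also have "\<dots> = sgm * l1norm (c (x k))" using MC by simp
      finally show ?thesis using DQ[of k] m0 by linarith
    qed
  qed
  have dnz: "0 < norm (d k)" for k
  proof (rule ccontr)
    assume "\<not> 0 < norm (d k)"
    hence d0: "d k = 0" by simp
    have "c (x k) = 0" using it(2)[of k] d0 by simp
    moreover have "gf (x k) + transpose (Jc (x k)) *v y k = 0" using it(1)[of k] d0
      by (simp add: eq_neg_iff_add_eq_0 add.commute)
    ultimately show False using no_stop by blast
  qed
  have Lf0: "0 \<le> Lf" using gf_lip by (simp add: lipschitz_on_def)
  have gam0: "0 \<le> gam i" for i using gradc_lip by (simp add: lipschitz_on_def)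
  have gsum0: "0 \<le> (\<Sum>i\<in>UNIV. gam i)" by (simp add: sum_nonneg gam0)
  have xX: "x k \<in> X" for k using iter_in_X by blast
  have cder: "\<forall>z\<in>X. ((\<lambda>z. c z $ i) has_derivative (\<lambda>h. Jc z $ i \<bullet> h)) (at z)" for i
    using c_deriv comp_deriv by blast
  from alg show ?thesis
  proof
    assume a1: "alg1_run f gf c Jc X eta x H d tau alpha"
    obtain rho L_m1 gam_m1 Lk Gk jacc where
      rho: "1 < rho" and gm: "\<forall>i. 0 < gam_m1 $ i"
      and L00: "0 < Lk 0 0" "Lk 0 0 \<le> L_m1"
      and G00: "\<forall>i. 0 < Gk 0 0 $ i \<and> Gk 0 0 $ i \<le> gam_m1 $ i"
      and LS: "\<forall>k. 0 < Lk (Suc k) 0 \<and> Lk (Suc k) 0 \<le> Lk k (jacc k)"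
      and GS: "\<forall>k i. 0 < Gk (Suc k) 0 $ i \<and> Gk (Suc k) 0 $ i \<le> Gk k (jacc k) $ i"
      and UPL: "\<forall>k j. j < jacc k \<longrightarrow> Lk k (Suc j) = (if LF_cond f gf (x k) (d k) (Lk k j) (akj1 eta c gf x H d tau Lk Gk k j) then Lk k j else rho * Lk k j)"
      and UPG: "\<forall>k j. j < jacc k \<longrightarrow> (\<forall>i. Gk k (Suc j) $ i = (if LC_cond c Jc (x k) (d k) i (Gk k j $ i) (akj1 eta c gf x H d tau Lk Gk k j) then Gk k j $ i else rho * Gk k j $ i))"
      and AL: "\<forall>k. alpha k = akj1 eta c gf x H d tau Lk Gk k (jacc k)"
      and INX: "\<forall>k j. j \<le> jacc k \<longrightarrow> x k + akj1 eta c gf x H d tau Lk Gk k j *\<^sub>R d k \<in> X"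
      using a1 unfolding alg1_run_def Let_def
      apply (elim exE conjE)
      subgoal for rho L_m1 gam_m1 Lk Gk jacc
        apply (rule that[of rho gam_m1 Lk L_m1 Gk jacc])
        apply (unfold akj1_def)
        apply blast+
        done
      done
    let ?a = "akj1 eta c gf x H d tau Lk Gk"
    have LFok: "\<forall>k j. j < jacc k \<longrightarrow> Lf \<le> Lk k j \<longrightarrow> LF_cond f gf (x k) (d k) (Lk k j) (?a k j)"
    proof (intro allI impI)
      fix k j assume j: "j < jacc k" and L: "Lf \<le> Lk k j"
      have inx: "x k + ?a k j *\<^sub>R d k \<in> X" using INX j by simp
      have "(1/2) * Lf * (?a k j)\<^sup>2 * (norm (d k))\<^sup>2 \<le> (1/2) * Lk k j * (?a k j)\<^sup>2 * (norm (d k))\<^sup>2"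
        using L by (intro mult_right_mono) simp_all
      thus "LF_cond f gf (x k) (d k) (Lk k j) (?a k j)"
        using f_descent(1)[OF X_convex X_open f_deriv gf_lip xX inx] unfolding LF_cond_def by linarith
    qed
    have LCok: "\<forall>k j. j < jacc k \<longrightarrow> gam i \<le> Gk k j $ i \<longrightarrow> LC_cond c Jc (x k) (d k) i (Gk k j $ i) (?a k j)" for i
    proof (intro allI impI)
      fix k j assume j: "j < jacc k" and L: "gam i \<le> Gk k j $ i"
      have inx: "x k + ?a k j *\<^sub>R d k \<in> X" using INX j by simp
      have "(1/2) * gam i * (?a k j)\<^sup>2 * (norm (d k))\<^sup>2 \<le> (1/2) * Gk k j $ i * (?a k j)\<^sup>2 * (norm (d k))\<^sup>2"
        using L by (intro mult_right_mono) simp_all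
      thus "LC_cond c Jc (x k) (d k) i (Gk k j $ i) (?a k j)"
        using f_descent(2)[OF X_convex X_open cder[of i] gradc_lip[rule_format, of i] xX inx] unfolding LC_cond_def by linarith
    qed
    define Lmax where "Lmax = max L_m1 (rho * Lf)"
    define Gmax where "Gmax i = max (gam_m1 $ i) (rho * gam i)" for i
    have LB: "\<forall>k j. j \<le> jacc k \<longrightarrow> 0 < Lk k j \<and> Lk k j \<le> Lmax"
      unfolding Lmax_def by (rule ladder[OF L00 LS UPL LFok rho])
    have GB: "\<forall>k j. j \<le> jacc k \<longrightarrow> 0 < Gk k j $ i \<and> Gk k j $ i \<le> Gmax i" for i
    proof -
      have i0: "0 < Gk 0 0 $ i" "Gk 0 0 $ i \<le> gam_m1 $ i" using G00 by auto
      have iS: "\<forall>k. 0 < Gk (Suc k) 0 $ i \<and> Gk (Suc k) 0 $ i \<le> Gk k (jacc k) $ i" using GS by auto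
      have up: "\<forall>k j. j < jacc k \<longrightarrow> Gk k (Suc j) $ i = (if LC_cond c Jc (x k) (d k) i (Gk k j $ i) (?a k j) then Gk k j $ i else rho * Gk k j $ i)"
        using UPG by auto
      show ?thesis unfolding Gmax_def by (rule ladder[OF i0 iS up LCok rho])
    qed
    define Lam where "Lam = tau_m1 * Lmax + (\<Sum>i\<in>UNIV. Gmax i)"
    have LamK: "0 < tau k * Lk k (jacc k) + (\<Sum>i\<in>UNIV. Gk k (jacc k) $ i)
        \<and> tau k * Lk k (jacc k) + (\<Sum>i\<in>UNIV. Gk k (jacc k) $ i) \<le> Lam" for k
    proof
      have l: "0 < Lk k (jacc k)" "Lk k (jacc k) \<le> Lmax" using LB by auto
      have g: "0 < Gk k (jacc k) $ i" "Gk k (jacc k) $ i \<le> Gmax i" for i using GB[of i] by auto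
      have "0 < tau k * Lk k (jacc k)" using tpos l by simp
      moreover have "0 \<le> (\<Sum>i\<in>UNIV. Gk k (jacc k) $ i)" using g by (simp add: sum_nonneg less_imp_le)
      ultimately show "0 < tau k * Lk k (jacc k) + (\<Sum>i\<in>UNIV. Gk k (jacc k) $ i)" by linarith
      have "tau k * Lk k (jacc k) \<le> tau_m1 * Lmax" using TB[of k] l tau_m1_pos
        by (intro mult_mono) simp_all
      moreover have "(\<Sum>i\<in>UNIV. Gk k (jacc k) $ i) \<le> (\<Sum>i\<in>UNIV. Gmax i)" using g by (intro sum_mono) simp
      ultimately show "tau k * Lk k (jacc k) + (\<Sum>i\<in>UNIV. Gk k (jacc k) $ i) \<le> Lam" unfolding Lam_def by linarith
    qed
    have Lam0: "0 < Lam" using LamK[of 0] by linarith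
    have "min 1 (2 * (1 - eta) * kq / Lam) \<le> alpha k" for k
    proof -
      have "0 < (norm (d k))\<^sup>2" using dnz by simp
      from alg1_step_lb[OF eta conjunct1[OF LamK] conjunct2[OF LamK] this KQ kq0]
      show ?thesis using AL unfolding akj1_def by simp
    qed
    moreover have "0 < min 1 (2 * (1 - eta) * kq / Lam)" using eta kq0 Lam0 by simp
    ultimately show ?thesis by blast
  next
    assume a2: "alg2_run f gf c X eta x H d tau alpha"
    obtain nu abar jacc where nu: "0 < nu" "nu < 1" and ab: "0 < abar"
      and A: "\<forall>k. alpha k = nu ^ jacc k * abar
           \<and> SD_cond f gf c eta (x k) (d k) (H k) (tau k) (nu ^ jacc k * abar)
           \<and> (\<forall>j < jacc k. \<not> SD_cond f gf c eta (x k) (d k) (H k) (tau k) (nu ^ j * abar))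
           \<and> (\<forall>j \<le> jacc k. x k + (nu ^ j * abar) *\<^sub>R d k \<in> X)"
      using a2 unfolding alg2_run_def by blast
    define L2 where "L2 = tau_m1 * Lf + (\<Sum>i\<in>UNIV. gam i) + 1"
    define a0 where "a0 = min 1 (2 * (1 - eta) * kq / L2)"
    have L2p: "0 < L2" unfolding L2_def using tau_m1_pos Lf0 gsum0 by (simp add: add_nonneg_pos)
    have a0p: "0 < a0" unfolding a0_def using L2p kq0 eta by simp
    have good: "SD_cond f gf c eta (x k) (d k) (H k) (tau k) a"
      if ap: "0 < a" "a \<le> a0" and inx: "x k + a *\<^sub>R d k \<in> X" for k a
    proof -
      let ?dq = "Delta_q (c (x k)) (tau k) (gf (x k)) (H k) (d k)"
      let ?n = "(norm (d k))\<^sup>2"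
      let ?Lk = "tau k * Lf + (\<Sum>i\<in>UNIV. gam i)"
      have a1': "a \<le> 1" using ap unfolding a0_def by simp
      have md: "merit f c (x k + a *\<^sub>R d k) (tau k) \<le> merit f c (x k) (tau k) - a * ?dq + (1/2) * ?Lk * a\<^sup>2 * ?n"
        using merit_descent[OF X_convex X_open f_deriv gf_lip c_deriv gradc_lip xX inx it(2) _ a1' tpos] ap
        by simp
      have Lk0: "0 \<le> ?Lk" using tpos[of k] Lf0 gsum0 by simp
      have LkL2: "?Lk \<le> L2"
      proof -
        have "tau k * Lf \<le> tau_m1 * Lf" using TB[of k] Lf0 by (intro mult_right_mono) simp_all
        thus ?thesis unfolding L2_def by linarith
      qed
      have A1: "?Lk * a \<le> L2 * a0" using LkL2 ap Lk0 L2p by (intro mult_mono) simp_all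
      have A2: "L2 * a0 \<le> 2 * (1 - eta) * kq"
      proof -
        have "a0 \<le> 2 * (1 - eta) * kq / L2" unfolding a0_def by (rule min.cobounded2)
        thus ?thesis using L2p by (simp add: pos_le_divide_eq mult.commute)
      qed
      have A3: "2 * (1 - eta) * kq * ?n \<le> 2 * (1 - eta) * ?dq"
        using KQ[of k] eta by (simp add: mult_left_mono mult.assoc)
      have "?Lk * a * ?n \<le> 2 * (1 - eta) * kq * ?n" using A1 A2 by (intro mult_right_mono) simp_all
      hence A4: "?Lk * a * ?n \<le> 2 * (1 - eta) * ?dq" using A3 by linarith
      have "(1/2) * ?Lk * a\<^sup>2 * ?n = (1/2) * a * (?Lk * a * ?n)" by (simp add: power2_eq_square)
      also have "\<dots> \<le> (1/2) * a * (2 * (1 - eta) * ?dq)" using A4 ap by (intro mult_left_mono) simp_all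
      also have "\<dots> = (1 - eta) * a * ?dq" by simp
      finally have "(1/2) * ?Lk * a\<^sup>2 * ?n \<le> (1 - eta) * a * ?dq" .
      thus ?thesis using md unfolding SD_cond_def by (simp add: algebra_simps)
    qed
    have "min abar (nu * a0) \<le> alpha k" for k
    proof (rule alg2_lb[OF nu ab])
      show "alpha k = nu ^ jacc k * abar" using A by blast
      show "\<forall>i<jacc k. \<not> SD_cond f gf c eta (x k) (d k) (H k) (tau k) (nu ^ i * abar)" using A by blast
      show "\<forall>i\<le>jacc k. (\<lambda>a. x k + a *\<^sub>R d k \<in> X) (nu ^ i * abar)" using A by blast
      show "\<And>a. 0 < a \<Longrightarrow> a \<le> a0 \<Longrightarrow> (\<lambda>a. x k + a *\<^sub>R d k \<in> X) a \<Longrightarrow> SD_cond f gf c eta (x k) (d k) (H k) (tau k) a"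
        using good by blast
    qed
    moreover have "0 < min abar (nu * a0)" using ab nu a0p by simp
    ultimately show ?thesis by blast
  qed
qed

end
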